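(* Let $q(\mathbf{y},\mathbf{x})$ be a joint distribution of a label $\mathbf{y}$ and inputs $\mathbf{x}\in\mathbb{R}^d$, and $e:\mathbb{R}^d\to\{0,1\}^d$ an explanation. Then $e$ is encoding if and only if there exist a selection $\mathbf{v}$ with $q(e(\mathbf{x})=\mathbf{v})>0$ and a set $\mathbf{S}_{\mathbf{v}}\subseteq\{\mathbf{x}_{\mathbf{v}}: e(\mathbf{x})=\mathbf{v}\}$ with $q(\mathbf{x}_{\mathbf{v}}\in\mathbf{S}_{\mathbf{v}})>0$ such that for all $\mathbf{a}\in\mathbf{S}_{\mathbf{v}}$, $\mathbf{y}$ is not conditionally independent of $\mathbf{E}_{\mathbf{v}}$ given $\mathbf{x}_{\mathbf{v}}=\mathbf{a}$.
   Context: For $\mathbf{v}\in\{0,1\}^d$, $\mathbf{x}_{\mathbf{v}}$ denotes the values of the coordinates selected by $\mathbf{v}$; the explanation is the random pair $\mathbf{x}_{e(\mathbf{x})}=(e(\mathbf{x}),\mathbf{x}_{e(\mathbf{x})})$, written $(\mathbf{v},\mathbf{a})$; $\mathbf{E}_{\mathbf{v}}=\mathbb{1}[e(\mathbf{x})=\mathbf{v}]$. Regular conditional distributions are assumed to exist. $e$ is encoding if there is a set $\mathbf{S}$ of pairs with $q(\mathbf{x}_{e(\mathbf{x})}\in\mathbf{S})>0$ such that for every $(\mathbf{v},\mathbf{a})\in\mathbf{S}$, $\mathbf{y}$ is not conditionally independent of $\mathbf{E}_{\mathbf{v}}$ given $\mathbf{x}_{\mathbf{v}}=\mathbf{a}$.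 *)

theory Defs
  imports "HOL-Probability.Probability"
begin

text \<open>Inputs live in real^'d (d = CARD('d)); a selection v in {0,1}^d is represented
  by the set of selected coordinates (a 'd set). The selected values x_v are represented
  by the zero-padded vector: selected coordinates kept, others set to 0 (for fixed v this
  is an injective, measurable re-encoding of the tuple of selected values).\<close>

definition sel :: "'d set \<Rightarrow> real^'d::finite \<Rightarrow> real^'d" where
  "sel v x = (\<chi> i. if i \<in> v then x $ i else 0)"

text \<open>A (version of the) regular conditional distribution of the pair (y, E_v), with
  E_v = [e(x) = v], given x_v: a probability kernel K from the x_v-space to
  label space times bool, such that integrating it against the law of x_v
  reproduces the joint law of (y, E_v, x_v).\<close>

definition is_rcd ::
  "('b \<times> (real^'d::finite)) measure \<Rightarrow> 'b measure \<Rightarrow> (real^'d \<Rightarrow> 'd set) \<Rightarrow> 'd set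
     \<Rightarrow> (real^'d \<Rightarrow> ('b \<times> bool) measure) \<Rightarrow> bool" where
  "is_rcd q N e v K \<longleftrightarrow>
     K \<in> borel \<rightarrow>\<^sub>M prob_algebra (N \<Otimes>\<^sub>M count_space UNIV) \<and>
     (\<forall>A \<in> sets (N \<Otimes>\<^sub>M count_space UNIV). \<forall>B \<in> sets borel.
        emeasure q {p \<in> space q. (fst p, e (snd p) = v) \<in> A \<and> sel v (snd p) \<in> B}
        = (\<integral>\<^sup>+ a. indicator B a * emeasure (K a) A \<partial>(distr q borel (\<lambda>p. sel v (snd p)))))"

text \<open>y is conditionally independent of E_v given x_v = a, where mu = K a is the
  conditional distribution of (y, E_v) given x_v = a: mu is the product of its marginals.\<close>

definition cond_indep_given :: "'b measure \<Rightarrow> ('b \<times> bool) measure \<Rightarrow> bool" where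
  "cond_indep_given N \<mu> \<longleftrightarrow>
     (\<forall>A \<in> sets N. \<forall>b::bool.
        measure \<mu> (A \<times> {b}) = measure \<mu> (A \<times> UNIV) * measure \<mu> (space N \<times> {b}))"

text \<open>e is encoding (w.r.t. the chosen versions K v of the conditional distributions).\<close>

definition encoding ::
  "('b \<times> (real^'d::finite)) measure \<Rightarrow> 'b measure \<Rightarrow> (real^'d \<Rightarrow> 'd set)
     \<Rightarrow> ('d set \<Rightarrow> real^'d \<Rightarrow> ('b \<times> bool) measure) \<Rightarrow> bool" where
  "encoding q N e K \<longleftrightarrow>
     (\<exists>S \<in> sets (count_space UNIV \<Otimes>\<^sub>M borel).
        measure q {p \<in> space q. (e (snd p), sel (e (snd p)) (snd p)) \<in> S} > 0 \<and>
        (\<forall>(v, a) \<in> S. \<not> cond_indep_given N (K v a)))"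

end

theory Submission
  imports Defs
begin
lemma sel_linear: "linear (sel v)"
  by (auto simp: linear_iff sel_def vec_eq_iff)
lemma sel_cont: "continuous_on UNIV (sel v)"
  using sel_linear linear_continuous_on linear_conv_bounded_linear by blast
lemma sel_meas[measurable]: "sel v \<in> borel_measurable borel"
  using sel_cont borel_measurable_continuous_onI by blast

lemma CI_of_zero:
  fixes \<mu> :: "('b \<times> bool) measure"
  assumes "prob_space \<mu>" "sets \<mu> = sets (N \<Otimes>\<^sub>M count_space UNIV)"
    "emeasure \<mu> (space N \<times> {True}) = 0"
  shows "cond_indep_given N \<mu>"
  unfolding cond_indep_given_def
proof (intro ballI allI)
  interpret prob_space \<mu> by fact
  fix A b assume A: "A \<in> sets N"
  have AN: "A \<subseteq> space N" using A sets.sets_into_space by blast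
  have sp: "space \<mu> = space N \<times> UNIV"
    using sets_eq_imp_space_eq[OF assms(2)] by (simp add: space_pair_measure)
  have ms: "X \<in> sets N \<Longrightarrow> X \<times> Y \<in> sets \<mu>" for X Y
    by (simp add: assms(2) pair_measureI)
  have T0: "measure \<mu> (space N \<times> {True}) = 0"
    using assms(3) by (simp add: measure_def)
  have AT0: "measure \<mu> (A \<times> {True}) = 0"
  proof -
    have "measure \<mu> (A \<times> {True}) \<le> measure \<mu> (space N \<times> {True})"
      using AN by (intro finite_measure_mono) (auto intro: ms)
    then show ?thesis using T0 measure_nonneg[of \<mu> "A \<times> {True}"] by linarith
  qed
  have split: "measure \<mu> (X \<times> UNIV) = measure \<mu> (X \<times> {True}) + measure \<mu> (X \<times> {False})"
    if "X \<in> sets N" for X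
  proof -
    have "X \<times> UNIV = X \<times> {True} \<union> X \<times> {False}" by auto
    moreover have "measure \<mu> (X \<times> {True} \<union> X \<times> {False}) = measure \<mu> (X \<times> {True}) + measure \<mu> (X \<times> {False})"
      using that by (intro finite_measure_Union ms) auto
    ultimately show ?thesis by simp
  qed
  have one: "measure \<mu> (space N \<times> UNIV) = 1" using prob_space sp by simp
  show "measure \<mu> (A \<times> {b}) = measure \<mu> (A \<times> UNIV) * measure \<mu> (space N \<times> {b})"
  proof (cases b)
    case True then show ?thesis using AT0 T0 by simp
  next
    case False
    have "measure \<mu> (space N \<times> {False}) = 1"
      using split[OF sets.top] one T0 by simp
    then show ?thesis using False split[OF A] AT0 by simp
  qed
qed
theorem lemma2:
  fixes q :: "('b \<times> (real^'d::finite)) measure"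
    and N :: "'b measure"
    and e :: "real^'d \<Rightarrow> 'd set"
    and K :: "'d set \<Rightarrow> real^'d \<Rightarrow> ('b \<times> bool) measure"
  assumes "prob_space q"
    and "sets q = sets (N \<Otimes>\<^sub>M borel)"
    and "e \<in> borel \<rightarrow>\<^sub>M count_space UNIV"
    and "\<And>v. is_rcd q N e v (K v)"
  shows "encoding q N e K \<longleftrightarrow>
    (\<exists>v. measure q {p \<in> space q. e (snd p) = v} > 0 \<and>
      (\<exists>Sv \<in> sets borel. Sv \<subseteq> {sel v x | x. e x = v} \<and>
         measure q {p \<in> space q. sel v (snd p) \<in> Sv} > 0 \<and>
         (\<forall>a \<in> Sv. \<not> cond_indep_given N (K v a))))"
proof -
  interpret P: prob_space q by fact
  have sp: "space q = space N \<times> UNIV"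
    using sets_eq_imp_space_eq[OF assms(2)] by (simp add: space_pair_measure)
  have snd_m[measurable]: "snd \<in> q \<rightarrow>\<^sub>M borel"
    by (subst measurable_cong_sets[OF assms(2) refl]) simp
  have e_m[measurable]: "e \<in> borel \<rightarrow>\<^sub>M count_space UNIV" by fact
  have esnd_m[measurable]: "(\<lambda>p. e (snd p)) \<in> q \<rightarrow>\<^sub>M count_space UNIV"
    using measurable_compose[OF snd_m e_m] by (simp add: comp_def)
  have selsnd_m[measurable]: "(\<lambda>p. sel v (snd p)) \<in> q \<rightarrow>\<^sub>M borel" for v
    using measurable_compose[OF snd_m sel_meas] by (simp add: comp_def)
  have setm: "{p \<in> space q. e (snd p) = v \<and> sel v (snd p) \<in> B} \<in> sets q"
    if "B \<in> sets borel" for v B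
  proof -
    have "{p \<in> space q. e (snd p) = v \<and> sel v (snd p) \<in> B} =
      ((\<lambda>p. e (snd p)) -` {v} \<inter> space q) \<inter> ((\<lambda>p. sel v (snd p)) -` B \<inter> space q)" by auto
    also have "\<dots> \<in> sets q"
      using measurable_sets[OF esnd_m, of "{v}"] measurable_sets[OF selsnd_m that] by auto
    finally show ?thesis .
  qed
  have setm1: "{p \<in> space q. e (snd p) = v} \<in> sets q" for v
    using setm[of UNIV v] by simp
  have setm2: "{p \<in> space q. sel v (snd p) \<in> B} \<in> sets q" if "B \<in> sets borel" for v B
  proof -
    have "{p \<in> space q. sel v (snd p) \<in> B} = (\<lambda>p. sel v (snd p)) -` B \<inter> space q" by auto
    then show ?thesis using measurable_sets[OF selsnd_m that] by simp
  qed
  show ?thesis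
  proof
    assume "encoding q N e K"
    then show "\<exists>v. measure q {p \<in> space q. e (snd p) = v} > 0 \<and>
      (\<exists>Sv \<in> sets borel. Sv \<subseteq> {sel v x | x. e x = v} \<and>
         measure q {p \<in> space q. sel v (snd p) \<in> Sv} > 0 \<and>
         (\<forall>a \<in> Sv. \<not> cond_indep_given N (K v a)))"
      proof -
      from \<open>encoding q N e K\<close> obtain S where S: "S \<in> sets (count_space UNIV \<Otimes>\<^sub>M borel)"
        "measure q {p \<in> space q. (e (snd p), sel (e (snd p)) (snd p)) \<in> S} > 0"
        "\<forall>(v, a) \<in> S. \<not> cond_indep_given N (K v a)"
        unfolding encoding_def by blast
      define Gv where "Gv w = {p \<in> space q. e (snd p) = w \<and> sel w (snd p) \<in> Pair w -` S}" for w
      have Sl: "Pair w -` S \<in> sets borel" for w using sets_Pair1[OF S(1)] .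
      have Gvm: "Gv w \<in> sets q" for w unfolding Gv_def using setm[OF Sl] .
      have "{p \<in> space q. (e (snd p), sel (e (snd p)) (snd p)) \<in> S} = (\<Union>w\<in>UNIV. Gv w)"
        unfolding Gv_def by auto
      then have "measure q {p \<in> space q. (e (snd p), sel (e (snd p)) (snd p)) \<in> S} \<le> (\<Sum>w\<in>UNIV. measure q (Gv w))"
        using P.finite_measure_subadditive_finite[of UNIV Gv] Gvm by auto
      note sumle = this
      have "\<exists>w. measure q (Gv w) > 0"
      proof (rule ccontr)
        assume "\<not> (\<exists>w. measure q (Gv w) > 0)"
        then have "\<forall>w. measure q (Gv w) \<le> 0" by (simp add: not_less)
        then have "(\<Sum>w\<in>UNIV. measure q (Gv w)) \<le> 0" by (simp add: sum_nonpos)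
        then show False using S(2) sumle by linarith
      qed
      then obtain v where Gpos: "measure q (Gv v) > 0" by blast
      have "measure q (Gv v) \<le> measure q {p \<in> space q. e (snd p) = v}"
        using setm1 by (intro P.finite_measure_mono) (auto simp: Gv_def)
      then have pos1: "measure q {p \<in> space q. e (snd p) = v} > 0" using Gpos by linarith
      define D where "D = {x. e x = v \<and> sel v x \<in> Pair v -` S}"
      have Dm: "D \<in> sets borel"
      proof -
        have "D = (e -` {v} \<inter> space borel) \<inter> (sel v -` (Pair v -` S) \<inter> space borel)"
          unfolding D_def by auto
        then show ?thesis using measurable_sets[OF e_m, of "{v}"] measurable_sets[OF sel_meas Sl[of v]] by auto
      qed
      define Q where "Q = distr q borel snd"
      have sQ: "sets Q = sets borel" unfolding Q_def by simp
      have Qfin: "emeasure Q (space Q) \<noteq> \<infinity>"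
      proof -
        have "prob_space Q" unfolding Q_def by (rule P.prob_space_distr[OF snd_m])
        then interpret Qp: prob_space Q .
        show ?thesis by simp
      qed
      have QC: "emeasure Q C = emeasure q (snd -` C \<inter> space q)" if "C \<in> sets borel" for C
        unfolding Q_def using that by (simp add: emeasure_distr)
      have "snd -` D \<inter> space q = Gv v" unfolding D_def Gv_def by auto
      then have "emeasure Q D = emeasure q (Gv v)" using QC[OF Dm] by simp
      also have "\<dots> > 0" using Gpos P.emeasure_eq_measure by simp
      finally have "0 < (SUP C \<in> {C. C \<subseteq> D \<and> compact C}. emeasure Q C)"
        using inner_regular[OF sQ Qfin Dm] by simp
      then obtain C where C: "C \<subseteq> D" "compact C" "0 < emeasure Q C"
        by (auto simp: less_SUP_iff)
      have Cb: "C \<in> sets borel" using C(2) by (simp add: compact_imp_closed borel_closed)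
      define Sv where "Sv = sel v ` C"
      have Svc: "compact Sv" unfolding Sv_def
        using compact_continuous_image[OF continuous_on_subset[OF sel_cont] C(2)] by simp
      have Svb: "Sv \<in> sets borel" using Svc by (simp add: compact_imp_closed borel_closed)
      have Svsub: "Sv \<subseteq> {sel v x | x. e x = v}"
      proof
        fix a assume "a \<in> Sv"
        then obtain x where "x \<in> C" "a = sel v x" unfolding Sv_def by blast
        then have "e x = v" using C(1) unfolding D_def by blast
        then show "a \<in> {sel v x | x. e x = v}" using \<open>a = sel v x\<close> by blast
      qed
      have Svnci: "\<forall>a \<in> Sv. \<not> cond_indep_given N (K v a)"
      proof
        fix a assume "a \<in> Sv"
        then obtain x where "x \<in> C" "a = sel v x" unfolding Sv_def by blast
        then have "(v, a) \<in> S" using C(1) unfolding D_def by blast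
        then show "\<not> cond_indep_given N (K v a)" using S(3) by fast
      qed
      have "0 < emeasure q (snd -` C \<inter> space q)" using C(3) QC[OF Cb] by simp
      then have "0 < measure q (snd -` C \<inter> space q)" using P.emeasure_eq_measure by simp
      also have "\<dots> \<le> measure q {p \<in> space q. sel v (snd p) \<in> Sv}"
        using setm2[OF Svb] unfolding Sv_def by (intro P.finite_measure_mono) auto
      finally have mpos: "0 < measure q {p \<in> space q. sel v (snd p) \<in> Sv}" .
      show ?thesis
        by (rule exI[of _ v], rule conjI[OF pos1], rule bexI[OF _ Svb]) (use Svsub mpos Svnci in blast)
    qed
  next
    assume "\<exists>v. measure q {p \<in> space q. e (snd p) = v} > 0 \<and>
      (\<exists>Sv \<in> sets borel. Sv \<subseteq> {sel v x | x. e x = v} \<and>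
         measure q {p \<in> space q. sel v (snd p) \<in> Sv} > 0 \<and>
         (\<forall>a \<in> Sv. \<not> cond_indep_given N (K v a)))"
    then obtain v Sv where Sv: "Sv \<in> sets borel" "measure q {p \<in> space q. sel v (snd p) \<in> Sv} > 0"
      "\<forall>a \<in> Sv. \<not> cond_indep_given N (K v a)" by blast
    define G where "G = {p \<in> space q. e (snd p) = v \<and> sel v (snd p) \<in> Sv}"
    have Gm: "G \<in> sets q" unfolding G_def using setm[OF Sv(1)] .
    have Gpos: "measure q G > 0"
    proof (rule ccontr)
      assume "\<not> measure q G > 0"
      then have "measure q G = 0" using measure_nonneg[of q G] by linarith
      then have G0: "emeasure q G = 0" using P.emeasure_eq_measure by simp
      define L where "L = distr q borel (\<lambda>p. sel v (snd p))"
      define A where "A = space N \<times> {True}"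
      have Am: "A \<in> sets (N \<Otimes>\<^sub>M count_space UNIV)" unfolding A_def
        by (intro pair_measureI) auto
      have Km: "K v \<in> borel \<rightarrow>\<^sub>M prob_algebra (N \<Otimes>\<^sub>M count_space UNIV)"
        using assms(4)[of v] unfolding is_rcd_def by blast
      have eqn: "emeasure q {p \<in> space q. (fst p, e (snd p) = v) \<in> A \<and> sel v (snd p) \<in> Sv}
        = (\<integral>\<^sup>+ a. indicator Sv a * emeasure (K v a) A \<partial>L)"
        using assms(4)[of v] Am Sv(1) unfolding is_rcd_def L_def by blast
      have "{p \<in> space q. (fst p, e (snd p) = v) \<in> A \<and> sel v (snd p) \<in> Sv} = G"
        unfolding G_def A_def using sp by auto
      with eqn G0 have I0: "(\<integral>\<^sup>+ a. indicator Sv a * emeasure (K v a) A \<partial>L) = 0" by simp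
      have sL: "sets L = sets borel" unfolding L_def by simp
      have spL: "space L = UNIV" unfolding L_def by simp
      have em: "(\<lambda>a. emeasure (K v a) A) \<in> borel_measurable borel"
        using measurable_compose[OF measurable_prob_algebraD[OF Km] measurable_emeasure_subprob_algebra[OF Am]]
        by (simp add: comp_def)
      have im: "(\<lambda>a. indicator Sv a * emeasure (K v a) A) \<in> borel_measurable L"
        unfolding measurable_cong_sets[OF sL refl] using em Sv(1) by measurable
      have "AE a in L. indicator Sv a * emeasure (K v a) A = 0"
        using I0 nn_integral_0_iff_AE[OF im] by simp
      then have "AE a in L. a \<notin> Sv"
      proof (rule eventually_mono)
        fix a assume h: "indicator Sv a * emeasure (K v a) A = 0"
        show "a \<notin> Sv"
        proof
          assume a: "a \<in> Sv"
          then have "emeasure (K v a) A = 0" using h by simp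
          moreover have "K v a \<in> space (prob_algebra (N \<Otimes>\<^sub>M count_space UNIV))"
            using measurable_space[OF Km] by simp
          ultimately have "cond_indep_given N (K v a)"
            unfolding space_prob_algebra A_def by (intro CI_of_zero) auto
          then show False using Sv(3) a by blast
        qed
      qed
      then have "emeasure L Sv = 0"
        using AE_iff_measurable[of Sv L "\<lambda>a. a \<notin> Sv"] Sv(1) sL spL by auto
      moreover have "emeasure L Sv = emeasure q {p \<in> space q. sel v (snd p) \<in> Sv}"
        unfolding L_def using Sv(1) by (subst emeasure_distr) (auto intro!: arg_cong[where f="emeasure q"])
      ultimately have "measure q {p \<in> space q. sel v (snd p) \<in> Sv} = 0"
        by (simp add: measure_def)
      then show False using Sv(2) by simp
    qed
    show "encoding q N e K"
      unfolding encoding_def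
    proof (intro bexI conjI)
      show "{v} \<times> Sv \<in> sets (count_space UNIV \<Otimes>\<^sub>M borel)"
        using Sv(1) by (intro pair_measureI) auto
      have "{p \<in> space q. (e (snd p), sel (e (snd p)) (snd p)) \<in> {v} \<times> Sv} = G"
        unfolding G_def by auto
      then show "measure q {p \<in> space q. (e (snd p), sel (e (snd p)) (snd p)) \<in> {v} \<times> Sv} > 0"
        using Gpos by simp
      show "\<forall>(v', a) \<in> {v} \<times> Sv. \<not> cond_indep_given N (K v' a)" using Sv(3) by auto
    qed
  qed
qed
end
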